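(* Let $K$ be a field of characteristic $\neq 2$ and let $\mathcal C$ be a 3-dimensional EACP over $K$ (natural basis $\{h_1,h_2,r\}$) with $\dim\mathcal C^2=1$. Then $\mathcal C$ is isomorphic to one of the following pairwise non-isomorphic algebras with basis $\{h_1,h_2,r\}$, in each of which $rh_i=h_ir$ ($i=1,2$) and all products not listed are zero: $\mathcal C_1$: $h_1r=r$; $\mathcal C_2$: $h_1r=h_2$; $\mathcal C_3$: $h_1r=h_1+r$.
   Context: An EACP over a field $K$ (characteristic $\neq 2$) is a $K$-algebra $\mathcal C$ with a basis $\{h_1,\dots,h_n,r\}$ (called a natural basis) whose multiplication is determined by bilinearity from $$h_ir=rh_i=\tfrac12\Big(\sum_{j=1}^n a_{ij}h_j+b_ir\Big),\qquad h_ih_j=0\ (i,j=1,\dots,n),\qquad rr=0,$$ for some constants $a_{ij},b_i\in K$. $\mathcal C^2$ denotes the span of all products $xy$, $x,y\in\mathcal C$. Isomorphism means algebra isomorphism. *)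

theory Defs
  imports "HOL-Analysis.Analysis"
begin

text \<open>Index type for the natural basis {h1, h2, r} of a 3-dimensional EACP.\<close>
datatype nb = H1 | H2 | R

lemma nb_UNIV: "(UNIV :: nb set) = {H1, H2, R}"
  using nb.exhaust by auto

instance nb :: finite
  by standard (simp add: nb_UNIV)

text \<open>A 3-dimensional algebra over a field 'k is given on 'k^nb by its structure
  constants: sc i j is the product of the i-th and j-th basis vectors.\<close>
definition alg_mult :: "(nb \<Rightarrow> nb \<Rightarrow> 'k::field ^ nb) \<Rightarrow> 'k ^ nb \<Rightarrow> 'k ^ nb \<Rightarrow> 'k ^ nb" where
  "alg_mult sc x y = (\<Sum>i\<in>UNIV. \<Sum>j\<in>UNIV. (x $ i * y $ j) *s sc i j)"

text \<open>The square C^2: span of all products (its dimension is the dimension of the span).\<close>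
definition alg_square :: "(nb \<Rightarrow> nb \<Rightarrow> 'k::field ^ nb) \<Rightarrow> ('k ^ nb) set" where
  "alg_square sc = vec.span {alg_mult sc x y | x y. True}"

text \<open>Algebra isomorphism: a linear bijection preserving the products.\<close>
definition alg_iso :: "(nb \<Rightarrow> nb \<Rightarrow> 'k::field ^ nb) \<Rightarrow> (nb \<Rightarrow> nb \<Rightarrow> 'k ^ nb) \<Rightarrow> bool" where
  "alg_iso sc1 sc2 \<longleftrightarrow> (\<exists>f :: 'k ^ nb \<Rightarrow> 'k ^ nb.
      Vector_Spaces.linear (*s) (*s) f \<and> bij f \<and>
      (\<forall>x y. f (alg_mult sc1 x y) = alg_mult sc2 (f x) (f y)))"

text \<open>Structure constants with h1 r = r h1 = u, h2 r = r h2 = v, all other basis products zero.\<close>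
definition sym_sc :: "'k::field ^ nb \<Rightarrow> 'k ^ nb \<Rightarrow> nb \<Rightarrow> nb \<Rightarrow> 'k ^ nb" where
  "sym_sc u v i j =
     (if (i = H1 \<and> j = R) \<or> (i = R \<and> j = H1) then u
      else if (i = H2 \<and> j = R) \<or> (i = R \<and> j = H2) then v
      else 0)"

text \<open>Coordinate vector c1 h1 + c2 h2 + c3 r.\<close>
definition coords :: "'k \<Rightarrow> 'k \<Rightarrow> 'k \<Rightarrow> 'k ^ nb" where
  "coords c1 c2 c3 = (\<chi> k. case k of H1 \<Rightarrow> c1 | H2 \<Rightarrow> c2 | R \<Rightarrow> c3)"

text \<open>The 3-dimensional EACP with natural basis {h1,h2,r}:
  h_i r = r h_i = 1/2 (a_i1 h1 + a_i2 h2 + b_i r), h_i h_j = 0, r r = 0.\<close>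
definition eacp3 :: "'k::field \<Rightarrow> 'k \<Rightarrow> 'k \<Rightarrow> 'k \<Rightarrow> 'k \<Rightarrow> 'k \<Rightarrow> nb \<Rightarrow> nb \<Rightarrow> 'k ^ nb" where
  "eacp3 a11 a12 a21 a22 b1 b2 =
     sym_sc ((1/2) *s coords a11 a12 b1) ((1/2) *s coords a21 a22 b2)"

definition C1 :: "nb \<Rightarrow> nb \<Rightarrow> 'k::field ^ nb" where
  "C1 = sym_sc (coords 0 0 1) 0"   \<comment> \<open>h1 r = r\<close>

definition C2 :: "nb \<Rightarrow> nb \<Rightarrow> 'k::field ^ nb" where
  "C2 = sym_sc (coords 0 1 0) 0"   \<comment> \<open>h1 r = h2\<close>

definition C3 :: "nb \<Rightarrow> nb \<Rightarrow> 'k::field ^ nb" where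
  "C3 = sym_sc (coords 1 0 1) 0"   \<comment> \<open>h1 r = h1 + r\<close>

end

theory Submission imports Defs begin

lemma coords_nth[simp]: "coords a b c $ H1 = a" "coords a b c $ H2 = b" "coords a b c $ R = c"
  by (simp_all add: coords_def)

lemma mult_sym: "alg_mult (sym_sc u v) x y =
   (x$H1*y$R + x$R*y$H1) *s u + (x$H2*y$R + x$R*y$H2) *s v"
  unfolding alg_mult_def nb_UNIV
  by (simp add: sym_sc_def vec_eq_iff)

lemma mult_sym_nth: "alg_mult (sym_sc u v) x y $ k =
   (x$H1*y$R + x$R*y$H1) * u$k + (x$H2*y$R + x$R*y$H2) * v$k"
  by (simp add: mult_sym algebra_simps)

lemma vec_nb_eq: "(x::'k::field^nb) = y \<longleftrightarrow> x$H1 = y$H1 \<and> x$H2 = y$H2 \<and> x$R = y$R"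
  by (metis (full_types) nb.exhaust vec_eq_iff)

lemma iso_intro:
  fixes f g :: "'k::field^nb \<Rightarrow> 'k^nb"
  assumes "\<And>x. g (f x) = x" "\<And>y. f (g y) = y" "\<And>x y. f (x + y) = f x + f y"
    "\<And>c x. f (c *s x) = c *s f x" "\<And>x y. f (alg_mult A x y) = alg_mult B (f x) (f y)"
  shows "alg_iso A B"
  unfolding alg_iso_def
proof (intro exI conjI)
  show "Vector_Spaces.linear (*s) (*s) f"
    unfolding Vector_Spaces.linear_iff using assms(3,4) vec.vector_space_axioms by auto
  show "bij f" using assms(1,2) by (metis bij_betw_byWitness UNIV_I subsetI)
qed (use assms in auto)

lemma iso_trans: assumes "alg_iso A B" "alg_iso B C" shows "alg_iso A C"
proof -
  obtain f where f: "Vector_Spaces.linear (*s) (*s) f" "bij f" "\<forall>x y. f (alg_mult A x y) = alg_mult B (f x) (f y)"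
    using assms(1) unfolding alg_iso_def by blast
  obtain g where g: "Vector_Spaces.linear (*s) (*s) g" "bij g" "\<forall>x y. g (alg_mult B x y) = alg_mult C (g x) (g y)"
    using assms(2) unfolding alg_iso_def by blast
  show ?thesis unfolding alg_iso_def
    apply (rule exI[of _ "g o f"])
    using f g Vector_Spaces.linear_compose bij_comp by fastforce
qed

lemma iso_prop:
  assumes "alg_iso A B"
  shows "(\<forall>x y z. alg_mult A (alg_mult A x y) z = 0) \<longleftrightarrow> (\<forall>x y z. alg_mult B (alg_mult B x y) z = 0)"
    and "(\<forall>x y z w. alg_mult A (alg_mult A x y) (alg_mult A z w) = 0) \<longleftrightarrow>
         (\<forall>x y z w. alg_mult B (alg_mult B x y) (alg_mult B z w) = 0)"
proof -
  obtain f where f: "Vector_Spaces.linear (*s) (*s) f" "bij f" and m: "\<And>x y. f (alg_mult A x y) = alg_mult B (f x) (f y)"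
    using assms(1) unfolding alg_iso_def by blast
  have add: "f (x + y) = f x + f y" for x y using f(1) unfolding Vector_Spaces.linear_iff by auto
  have f0: "f 0 = 0" using add[of 0 0] by simp
  have inj: "f x = f y \<Longrightarrow> x = y" for x y using f(2) by (meson bij_def injD)
  have surj: "\<exists>x. y = f x" for y using f(2) by (meson bij_def surjD)
  show "(\<forall>x y z. alg_mult A (alg_mult A x y) z = 0) \<longleftrightarrow> (\<forall>x y z. alg_mult B (alg_mult B x y) z = 0)"
  proof
    assume H: "\<forall>x y z. alg_mult A (alg_mult A x y) z = 0"
    show "\<forall>x y z. alg_mult B (alg_mult B x y) z = 0"
    proof (intro allI)
      fix x y z
      obtain x' y' z' where "x = f x'" "y = f y'" "z = f z'" using surj by metis
      thus "alg_mult B (alg_mult B x y) z = 0" using H m f0 by metis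
    qed
  next
    assume H: "\<forall>x y z. alg_mult B (alg_mult B x y) z = 0"
    show "\<forall>x y z. alg_mult A (alg_mult A x y) z = 0"
      using H m f0 inj by metis
  qed
  show "(\<forall>x y z w. alg_mult A (alg_mult A x y) (alg_mult A z w) = 0) \<longleftrightarrow>
         (\<forall>x y z w. alg_mult B (alg_mult B x y) (alg_mult B z w) = 0)"
  proof
    assume H: "\<forall>x y z w. alg_mult A (alg_mult A x y) (alg_mult A z w) = 0"
    show "\<forall>x y z w. alg_mult B (alg_mult B x y) (alg_mult B z w) = 0"
    proof (intro allI)
      fix x y z w
      obtain x' y' z' w' where "x = f x'" "y = f y'" "z = f z'" "w = f w'" using surj by metis
      thus "alg_mult B (alg_mult B x y) (alg_mult B z w) = 0" using H m f0 by metis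
    qed
  next
    assume H: "\<forall>x y z w. alg_mult B (alg_mult B x y) (alg_mult B z w) = 0"
    show "\<forall>x y z w. alg_mult A (alg_mult A x y) (alg_mult A z w) = 0"
      using H m f0 inj by metis
  qed
qed


lemma coords_eta: "coords (w$H1) (w$H2) (w$R) = w"
  by (simp add: vec_eq_iff coords_def split: nb.split)

lemma notP_C1: "\<not> (\<forall>x y z. alg_mult (C1::nb\<Rightarrow>nb\<Rightarrow>'k::field^nb) (alg_mult C1 x y) z = 0)"
proof -
  have "alg_mult (C1::nb\<Rightarrow>nb\<Rightarrow>'k^nb) (alg_mult C1 (coords 1 0 0) (coords 0 0 1)) (coords 1 0 0) $ R = 1"
    by (simp add: C1_def mult_sym_nth)
  thus ?thesis by force
qed

lemma P_C2: "\<forall>x y z. alg_mult (C2::nb\<Rightarrow>nb\<Rightarrow>'k::field^nb) (alg_mult C2 x y) z = 0"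
  by (simp add: C2_def vec_nb_eq mult_sym_nth)

lemma Q_C1: "\<forall>x y z w. alg_mult (C1::nb\<Rightarrow>nb\<Rightarrow>'k::field^nb) (alg_mult C1 x y) (alg_mult C1 z w) = 0"
  by (simp add: C1_def vec_nb_eq mult_sym_nth)

lemma Q_C2: "\<forall>x y z w. alg_mult (C2::nb\<Rightarrow>nb\<Rightarrow>'k::field^nb) (alg_mult C2 x y) (alg_mult C2 z w) = 0"
  by (simp add: C2_def vec_nb_eq mult_sym_nth)

lemma notQ_C3:
  assumes "(2::'k::field) \<noteq> 0"
  shows "\<not> (\<forall>x y z w. alg_mult (C3::nb\<Rightarrow>nb\<Rightarrow>'k^nb) (alg_mult C3 x y) (alg_mult C3 z w) = 0)"
proof -
  have "alg_mult (C3::nb\<Rightarrow>nb\<Rightarrow>'k^nb) (alg_mult C3 (coords 1 0 0) (coords 0 0 1)) (alg_mult C3 (coords 1 0 0) (coords 0 0 1)) $ R = 2"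
    by (simp add: C3_def mult_sym_nth)
  thus ?thesis using assms by force
qed

lemma square_sym: "alg_square (sym_sc u v) = vec.span {u, v}"
proof -
  let ?S = "{alg_mult (sym_sc u v) x y | x y. True}"
  have "?S \<subseteq> vec.span {u, v}"
  proof
    fix p assume "p \<in> ?S"
    then obtain x y where p: "p = alg_mult (sym_sc u v) x y" by blast
    show "p \<in> vec.span {u, v}" unfolding p mult_sym
      by (intro vec.span_add vec.span_scale vec.span_base) auto
  qed
  hence 1: "vec.span ?S \<subseteq> vec.span {u,v}"
    by (simp add: vec.span_minimal vec.subspace_span)
  have "u = alg_mult (sym_sc u v) (coords 1 0 0) (coords 0 0 1)"
       "v = alg_mult (sym_sc u v) (coords 0 1 0) (coords 0 0 1)"
    by (simp_all add: mult_sym)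
  hence "{u,v} \<subseteq> ?S" by blast
  hence "vec.span {u,v} \<subseteq> vec.span ?S" by (rule vec.span_mono)
  with 1 show ?thesis unfolding alg_square_def by blast
qed

lemma dim_one_cases:
  fixes u v :: "'k::field^nb"
  assumes "vec.dim (vec.span {u, v}) = 1"
  shows "(u \<noteq> 0 \<and> (\<exists>b. v = b *s u)) \<or> (u = 0 \<and> v \<noteq> 0)"
proof (rule ccontr)
  assume H: "\<not> ?thesis"
  show False
  proof (cases "u = 0")
    case True
    with H have "v = 0" by auto
    with True have "vec.span {u,v} = vec.span {}" by simp
    hence "vec.dim (vec.span {u,v}) = 0" using vec.dim_span[of "{}"] by simp
    with assms show False by simp
  next
    case False
    with H have nv: "v \<notin> vec.span {u}" by (auto simp: vec.span_singleton)
    have iu: "vec.independent {u}" using False by (simp add: vec.independent_insert)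
    have "vec.independent (insert v {u})" using nv iu by (simp add: vec.independent_insert)
    moreover have "v \<noteq> u" using nv vec.span_base by auto
    ultimately have "vec.dim (vec.span {u,v}) = 2"
      by (simp add: vec.dim_eq_card_independent insert_commute)
    with assms show False by simp
  qed
qed


lemma step1a:
  fixes u :: "'k::field^nb"
  shows "alg_iso (sym_sc u (b *s u)) (sym_sc (coords (u$H1 + b*u$H2) (u$H2) (u$R)) 0)"
  apply (rule iso_intro[where f="\<lambda>x. coords (x$H1 + b*x$H2) (x$H2) (x$R)"
                          and g="\<lambda>y. coords (y$H1 - b*y$H2) (y$H2) (y$R)"])
  by (simp_all add: vec_nb_eq mult_sym_nth algebra_simps)

lemma step1b:
  fixes v :: "'k::field^nb"
  shows "alg_iso (sym_sc 0 v) (sym_sc (coords (v$H2) (v$H1) (v$R)) 0)"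
  apply (rule iso_intro[where f="\<lambda>x. coords (x$H2) (x$H1) (x$R)"
                          and g="\<lambda>y. coords (y$H2) (y$H1) (y$R)"])
  by (simp_all add: vec_nb_eq mult_sym_nth algebra_simps)

lemma step2i:
  fixes c2 :: "'k::field"
  assumes "c2 \<noteq> 0"
  shows "alg_iso (sym_sc (coords 0 c2 0) 0) C2"
  unfolding C2_def
  apply (rule iso_intro[where f="\<lambda>x. coords (x$H1) (x$H2 / c2) (x$R)"
                          and g="\<lambda>y. coords (y$H1) (c2 * y$H2) (y$R)"])
  using assms by (simp_all add: vec_nb_eq mult_sym_nth field_simps)

lemma step2ii:
  fixes c2 :: "'k::field"
  assumes "c3 \<noteq> 0"
  shows "alg_iso (sym_sc (coords 0 c2 c3) 0) C1"
  unfolding C1_def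
  apply (rule iso_intro[where f="\<lambda>x. coords (c3*x$H1) (x$H2 - c2/c3*x$R) (x$R)"
                          and g="\<lambda>y. coords (y$H1/c3) (y$H2 + c2/c3*y$R) (y$R)"])
  using assms by (simp_all add: vec_nb_eq mult_sym_nth field_simps)

lemma step2iii:
  fixes c2 :: "'k::field"
  assumes "c1 \<noteq> 0"
  shows "alg_iso (sym_sc (coords c1 c2 0) 0) C1"
  unfolding C1_def
  apply (rule iso_intro[where f="\<lambda>x. coords (c1*x$R) (x$H2 - c2/c1*x$H1) (x$H1)"
                          and g="\<lambda>y. coords (y$R) (y$H2 + c2/c1*y$R) (y$H1/c1)"])
  using assms by (simp_all add: vec_nb_eq mult_sym_nth field_simps)

lemma step2iv:
  fixes c2 :: "'k::field"
  assumes "c1 \<noteq> 0" "c3 \<noteq> 0"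
  shows "alg_iso (sym_sc (coords c1 c2 c3) 0) C3"
  unfolding C3_def
  apply (rule iso_intro[where f="\<lambda>x. coords (c3*x$H1) (x$H2 - c2/c3*x$R) (c1*x$R)"
                          and g="\<lambda>y. coords (y$H1/c3) (y$H2 + c2/(c1*c3)*y$R) (y$R/c1)"])
  using assms by (simp_all add: vec_nb_eq mult_sym_nth field_simps)


lemma to_normal:
  fixes u v :: "'k::field^nb"
  assumes "vec.dim (alg_square (sym_sc u v)) = 1"
  shows "\<exists>w. w \<noteq> 0 \<and> alg_iso (sym_sc u v) (sym_sc w 0)"
proof -
  from dim_one_cases assms[unfolded square_sym]
  consider (a) b where "u \<noteq> 0" "v = b *s u" | (b) "u = 0" "v \<noteq> 0" by blast
  thus ?thesis
  proof cases
    case (a b)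
    have "coords (u$H1 + b*u$H2) (u$H2) (u$R) \<noteq> 0"
      using a(1) by (auto simp: vec_nb_eq)
    thus ?thesis using step1a[of u b] a by blast
  next
    case b
    have "coords (v$H2) (v$H1) (v$R) \<noteq> 0"
      using b(2) by (auto simp: vec_nb_eq)
    thus ?thesis using step1b[of v] b by blast
  qed
qed

lemma normal_cases:
  fixes w :: "'k::field^nb"
  assumes "w \<noteq> 0"
  shows "alg_iso (sym_sc w 0) C1 \<or> alg_iso (sym_sc w 0) C2 \<or> alg_iso (sym_sc w 0) C3"
proof -
  have w: "w = coords (w$H1) (w$H2) (w$R)" by (simp add: coords_eta)
  show ?thesis
  proof (cases "w$H1 = 0")
    case True
    show ?thesis
    proof (cases "w$R = 0")
      case True2: True
      with True assms have "w$H2 \<noteq> 0" by (auto simp: vec_nb_eq)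
      with step2i[of "w$H2"] True True2 w show ?thesis by metis
    next
      case False
      with step2ii[of "w$R" "w$H2"] True w show ?thesis by metis
    qed
  next
    case False
    show ?thesis
    proof (cases "w$R = 0")
      case True
      with step2iii[of "w$H1" "w$H2"] False w show ?thesis by metis
    next
      case False2: False
      with step2iv[of "w$H1" "w$R" "w$H2"] False w show ?thesis by metis
    qed
  qed
qed

theorem mainTheorem14:
  fixes a11 a12 a21 a22 b1 b2 :: "'k::field"
  assumes char: "(2::'k) \<noteq> 0"
    and sq: "vec.dim (alg_square (eacp3 a11 a12 a21 a22 b1 b2)) = 1"
  shows "(alg_iso (eacp3 a11 a12 a21 a22 b1 b2) (C1 :: nb \<Rightarrow> nb \<Rightarrow> 'k ^ nb)
          \<or> alg_iso (eacp3 a11 a12 a21 a22 b1 b2) (C2 :: nb \<Rightarrow> nb \<Rightarrow> 'k ^ nb)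
          \<or> alg_iso (eacp3 a11 a12 a21 a22 b1 b2) (C3 :: nb \<Rightarrow> nb \<Rightarrow> 'k ^ nb))
         \<and> \<not> alg_iso (C1 :: nb \<Rightarrow> nb \<Rightarrow> 'k ^ nb) C2
         \<and> \<not> alg_iso (C1 :: nb \<Rightarrow> nb \<Rightarrow> 'k ^ nb) C3
         \<and> \<not> alg_iso (C2 :: nb \<Rightarrow> nb \<Rightarrow> 'k ^ nb) C3"
proof (intro conjI)
  obtain w where w: "w \<noteq> 0" "alg_iso (eacp3 a11 a12 a21 a22 b1 b2) (sym_sc w 0)"
    using to_normal sq unfolding eacp3_def by blast
  show "alg_iso (eacp3 a11 a12 a21 a22 b1 b2) (C1 :: nb \<Rightarrow> nb \<Rightarrow> 'k ^ nb)
          \<or> alg_iso (eacp3 a11 a12 a21 a22 b1 b2) (C2 :: nb \<Rightarrow> nb \<Rightarrow> 'k ^ nb)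
          \<or> alg_iso (eacp3 a11 a12 a21 a22 b1 b2) (C3 :: nb \<Rightarrow> nb \<Rightarrow> 'k ^ nb)"
    using normal_cases[OF w(1)] iso_trans[OF w(2)] by blast
  show "\<not> alg_iso (C1 :: nb \<Rightarrow> nb \<Rightarrow> 'k ^ nb) C2"
    using iso_prop(1)[of "C1::nb \<Rightarrow> nb \<Rightarrow> 'k ^ nb" C2] notP_C1 P_C2 by blast
  show "\<not> alg_iso (C1 :: nb \<Rightarrow> nb \<Rightarrow> 'k ^ nb) C3"
    using iso_prop(2)[of "C1::nb \<Rightarrow> nb \<Rightarrow> 'k ^ nb" C3] Q_C1 notQ_C3[OF char] by blast
  show "\<not> alg_iso (C2 :: nb \<Rightarrow> nb \<Rightarrow> 'k ^ nb) C3"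
    using iso_prop(2)[of "C2::nb \<Rightarrow> nb \<Rightarrow> 'k ^ nb" C3] Q_C2 notQ_C3[OF char] by blast
qed

end
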